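(* Let $PS = D \cup LP \cup MP \cup IC$ be a P2P system such that no negation occurs in $LP$. Then the relation $\sqsupseteq$ (max-min preferability) is a partial order on the set of weak models of $PS$.
   Context: Peer atoms: a peer identifier is a positive integer; a peer atom is $i\!:\!p(t_1,\dots,t_k)$ with $i$ a peer identifier, $p$ a predicate and $t_j$ terms; $i\!:\!p$ is a peer predicate. A literal is an atom $A$ or its negation-as-failure $not\ A$. Built-in atoms are $X\,\theta\,Y$ with $\theta\in\{<,>,\le,\ge,=,\neq\}$. Rules (all safe): a standard rule $H\leftarrow \mathcal B$; an integrity constraint $\leftarrow \mathcal B$; a maximal mapping rule $i\!:\!h(X) \leftharpoonup j\!:\!(p_1(X_1),\dots,p_m(X_m),\varphi)$ with $i\neq j$; a minimal mapping rule, identical but with $\leftharpoondown$. A peer $P_i=\langle D_i,LP_i,MP_i,IC_i\rangle$ consists of a finite set $D_i$ of ground atoms with identifier $i$, a finite set $LP_i$ of standard rules all of whose atoms have identifier $i$, a finite set $MP_i$ of mapping rules with head identifier $i$, and a finite set $IC_i$ of integrity constraints over atoms with identifier $i$. A P2P system is a set $PS=\{P_1,\dots,P_n\}$ of peers in which every source identifier of a mapping rule lies in $[1..n]$; $D,LP,MP,IC$ are the unions of the components, and $PS$ is identified with $D\cup LP\cup MP\cup IC$. A predicate is derived if it heads a standard rule, a mapping predicate if it heads a mapping rule, base otherwise; each predicate has exactly one type and each mapping predicate heads exactly one mapping rule. Semantics: interpretation = set of ground peer atoms; $A$ true iff $A\in M$, $not\ A$ true iff $A\notin M$; a standard rule is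 satisfied iff its body is false or its head true; a constraint iff its body is false. $MM(\Pi)$ = inclusion-minimal models. $St(r)$ turns a mapping rule with head $H$, body $\mathcal B$ into $H\leftarrow\mathcal B$. $M$ is a weak model of $PS$ if $\{M\}=MM(St(PS^M))$, where $PS^M$ is obtained from $ground(PS)$ by removing every rule whose body contains $not\ A$ with $A\in M$, deleting negative literals from the remaining rules, and removing every ground mapping rule whose head is not in $M$. $M[\overline{MP}]$ (resp. $M[\underline{MP}]$) is the set of atoms of $M$ whose predicate heads a maximal (resp. minimal) mapping rule. For weak models $M,N$: $M\sqsupseteq N$ iff either $M[\overline{MP}]\supsetneq N[\overline{MP}]$, or $M[\overline{MP}]=N[\overline{MP}]$ and $M[\underline{MP}]\subseteq N[\underline{MP}]$. *)

theory Defs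
  imports Main
begin

text \<open>Terms: variables of type 'v and constants of type 'c (constants are linearly
ordered so that the built-in comparisons make sense).\<close>
datatype ('v, 'c) trm = Var 'v | Const 'c

text \<open>Peer atoms i:p(t1,...,tk); the argument type 'a is either terms or (for ground atoms) constants.
Peer identifiers are positive naturals.\<close>
datatype ('p, 'a) atom = Atom (peer_of: nat) (pred_of: 'p) (args_of: "'a list")

datatype cmp = Lt | Gt | Le | Ge | Eq | Neq

datatype ('p, 'a) lit = Pos "('p, 'a) atom" | Neg "('p, 'a) atom" | Cmp cmp 'a 'a

datatype mkind = MaxM | MinM

datatype ('p, 'a) rule =
    Std "('p, 'a) atom" "('p, 'a) lit list"
  | Constr "('p, 'a) lit list"
  | Mapr mkind "('p, 'a) atom" "('p, 'a) lit list"

fun body :: "('p, 'a) rule \<Rightarrow> ('p, 'a) lit list" where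
  "body (Std H B) = B"
| "body (Constr B) = B"
| "body (Mapr k H B) = B"

fun is_neg :: "('p, 'a) lit \<Rightarrow> bool" where
  "is_neg (Neg A) = True"
| "is_neg _ = False"

fun is_pos :: "('p, 'a) lit \<Rightarrow> bool" where
  "is_pos (Pos A) = True"
| "is_pos _ = False"

fun is_cmp :: "('p, 'a) lit \<Rightarrow> bool" where
  "is_cmp (Cmp t x y) = True"
| "is_cmp _ = False"

fun lit_atoms :: "('p, 'a) lit \<Rightarrow> ('p, 'a) atom set" where
  "lit_atoms (Pos A) = {A}"
| "lit_atoms (Neg A) = {A}"
| "lit_atoms (Cmp t x y) = {}"

fun rule_atoms :: "('p, 'a) rule \<Rightarrow> ('p, 'a) atom set" where
  "rule_atoms (Std H B) = insert H (\<Union>l\<in>set B. lit_atoms l)"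
| "rule_atoms (Constr B) = (\<Union>l\<in>set B. lit_atoms l)"
| "rule_atoms (Mapr k H B) = insert H (\<Union>l\<in>set B. lit_atoms l)"

fun term_vars :: "('v, 'c) trm \<Rightarrow> 'v set" where
  "term_vars (Var v) = {v}"
| "term_vars (Const c) = {}"

fun term_consts :: "('v, 'c) trm \<Rightarrow> 'c set" where
  "term_consts (Var v) = {}"
| "term_consts (Const c) = {c}"

definition atom_vars :: "('p, ('v, 'c) trm) atom \<Rightarrow> 'v set" where
  "atom_vars A = (\<Union>t\<in>set (args_of A). term_vars t)"

fun lit_vars :: "('p, ('v, 'c) trm) lit \<Rightarrow> 'v set" where
  "lit_vars (Pos A) = atom_vars A"
| "lit_vars (Neg A) = atom_vars A"
| "lit_vars (Cmp t x y) = term_vars x \<union> term_vars y"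

fun rule_vars :: "('p, ('v, 'c) trm) rule \<Rightarrow> 'v set" where
  "rule_vars (Std H B) = atom_vars H \<union> (\<Union>l\<in>set B. lit_vars l)"
| "rule_vars (Constr B) = (\<Union>l\<in>set B. lit_vars l)"
| "rule_vars (Mapr k H B) = atom_vars H \<union> (\<Union>l\<in>set B. lit_vars l)"

fun lit_consts :: "('p, ('v, 'c) trm) lit \<Rightarrow> 'c set" where
  "lit_consts (Pos A) = (\<Union>t\<in>set (args_of A). term_consts t)"
| "lit_consts (Neg A) = (\<Union>t\<in>set (args_of A). term_consts t)"
| "lit_consts (Cmp t x y) = term_consts x \<union> term_consts y"

fun rule_consts :: "('p, ('v, 'c) trm) rule \<Rightarrow> 'c set" where
  "rule_consts (Std H B) = (\<Union>t\<in>set (args_of H). term_consts t) \<union> (\<Union>l\<in>set B. lit_consts l)"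
| "rule_consts (Constr B) = (\<Union>l\<in>set B. lit_consts l)"
| "rule_consts (Mapr k H B) = (\<Union>t\<in>set (args_of H). term_consts t) \<union> (\<Union>l\<in>set B. lit_consts l)"

definition safe :: "('p, ('v, 'c) trm) rule \<Rightarrow> bool" where
  "safe r \<longleftrightarrow> rule_vars r \<subseteq> (\<Union>A\<in>{A. Pos A \<in> set (body r)}. atom_vars A)"

record ('p, 'v, 'c) peer =
  D  :: "('p, 'c) atom set"
  LP :: "('p, ('v, 'c) trm) rule set"
  MP :: "('p, ('v, 'c) trm) rule set"
  IC :: "('p, ('v, 'c) trm) rule set"

definition mapping_rule_ok :: "nat \<Rightarrow> nat \<Rightarrow> ('p, ('v, 'c) trm) rule \<Rightarrow> bool" where
  "mapping_rule_ok n i r \<longleftrightarrow>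
     (\<exists>k H B j. r = Mapr k H B \<and> peer_of H = i \<and> j \<noteq> i \<and> 1 \<le> j \<and> j \<le> n \<and>
        (\<exists>l\<in>set B. is_pos l) \<and>
        (\<forall>l\<in>set B. is_pos l \<or> is_cmp l) \<and>
        (\<forall>A. Pos A \<in> set B \<longrightarrow> peer_of A = j))"

definition peer_ok :: "nat \<Rightarrow> nat \<Rightarrow> ('p, 'v, 'c) peer \<Rightarrow> bool" where
  "peer_ok n i P \<longleftrightarrow>
     finite (D P) \<and> (\<forall>A\<in>D P. peer_of A = i) \<and>
     finite (LP P) \<and> (\<forall>r\<in>LP P. (\<exists>H B. r = Std H B) \<and> (\<forall>A\<in>rule_atoms r. peer_of A = i)) \<and>
     finite (MP P) \<and> (\<forall>r\<in>MP P. mapping_rule_ok n i r) \<and>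
     finite (IC P) \<and> (\<forall>r\<in>IC P. (\<exists>B. r = Constr B) \<and> (\<forall>A\<in>rule_atoms r. peer_of A = i)) \<and>
     (\<forall>r\<in>LP P \<union> MP P \<union> IC P. safe r)"

text \<open>A P2P system PS = {P_1,...,P_n} is represented as a list; peer P_i is PS ! (i - 1).\<close>
definition allD :: "('p, 'v, 'c) peer list \<Rightarrow> ('p, 'c) atom set" where
  "allD PS = (\<Union>P\<in>set PS. D P)"
definition allLP :: "('p, 'v, 'c) peer list \<Rightarrow> ('p, ('v, 'c) trm) rule set" where
  "allLP PS = (\<Union>P\<in>set PS. LP P)"
definition allMP :: "('p, 'v, 'c) peer list \<Rightarrow> ('p, ('v, 'c) trm) rule set" where
  "allMP PS = (\<Union>P\<in>set PS. MP P)"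
definition allIC :: "('p, 'v, 'c) peer list \<Rightarrow> ('p, ('v, 'c) trm) rule set" where
  "allIC PS = (\<Union>P\<in>set PS. IC P)"

definition derived_preds :: "('p, 'v, 'c) peer list \<Rightarrow> (nat \<times> 'p) set" where
  "derived_preds PS = {(peer_of H, pred_of H) | H B. Std H B \<in> allLP PS}"
definition mapping_preds :: "('p, 'v, 'c) peer list \<Rightarrow> (nat \<times> 'p) set" where
  "mapping_preds PS = {(peer_of H, pred_of H) | k H B. Mapr k H B \<in> allMP PS}"

definition p2p_system :: "('p, 'v, 'c) peer list \<Rightarrow> bool" where
  "p2p_system PS \<longleftrightarrow>
     (\<forall>k < length PS. peer_ok (length PS) (Suc k) (PS ! k)) \<and>
     derived_preds PS \<inter> mapping_preds PS = {} \<and>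
     (\<forall>k1 H1 B1 k2 H2 B2. Mapr k1 H1 B1 \<in> allMP PS \<longrightarrow> Mapr k2 H2 B2 \<in> allMP PS \<longrightarrow>
        (peer_of H1, pred_of H1) = (peer_of H2, pred_of H2) \<longrightarrow>
        Mapr k1 H1 B1 = Mapr k2 H2 B2)"

fun inst :: "('v \<Rightarrow> 'c) \<Rightarrow> ('v, 'c) trm \<Rightarrow> 'c" where
  "inst \<sigma> (Var v) = \<sigma> v"
| "inst \<sigma> (Const c) = c"

fun gatom :: "('v \<Rightarrow> 'c) \<Rightarrow> ('p, ('v, 'c) trm) atom \<Rightarrow> ('p, 'c) atom" where
  "gatom \<sigma> (Atom i p ts) = Atom i p (map (inst \<sigma>) ts)"

fun glit :: "('v \<Rightarrow> 'c) \<Rightarrow> ('p, ('v, 'c) trm) lit \<Rightarrow> ('p, 'c) lit" where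
  "glit \<sigma> (Pos A) = Pos (gatom \<sigma> A)"
| "glit \<sigma> (Neg A) = Neg (gatom \<sigma> A)"
| "glit \<sigma> (Cmp t x y) = Cmp t (inst \<sigma> x) (inst \<sigma> y)"

fun grule :: "('v \<Rightarrow> 'c) \<Rightarrow> ('p, ('v, 'c) trm) rule \<Rightarrow> ('p, 'c) rule" where
  "grule \<sigma> (Std H B) = Std (gatom \<sigma> H) (map (glit \<sigma>) B)"
| "grule \<sigma> (Constr B) = Constr (map (glit \<sigma>) B)"
| "grule \<sigma> (Mapr k H B) = Mapr k (gatom \<sigma> H) (map (glit \<sigma>) B)"

definition herbrand :: "('p, 'v, 'c) peer list \<Rightarrow> 'c set" where
  "herbrand PS = (\<Union>A\<in>allD PS. set (args_of A)) \<union>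
                 (\<Union>r\<in>allLP PS \<union> allMP PS \<union> allIC PS. rule_consts r)"

definition ground :: "('p, 'v, 'c) peer list \<Rightarrow> ('p, 'c) rule set" where
  "ground PS = (\<lambda>A. Std A []) ` allD PS \<union>
     {grule \<sigma> r | \<sigma> r. r \<in> allLP PS \<union> allMP PS \<union> allIC PS \<and>
                       (\<forall>v\<in>rule_vars r. \<sigma> v \<in> herbrand PS)}"

fun cmp_eval :: "cmp \<Rightarrow> 'c::linorder \<Rightarrow> 'c \<Rightarrow> bool" where
  "cmp_eval Lt x y = (x < y)"
| "cmp_eval Gt x y = (x > y)"
| "cmp_eval Le x y = (x \<le> y)"
| "cmp_eval Ge x y = (x \<ge> y)"
| "cmp_eval Eq x y = (x = y)"
| "cmp_eval Neq x y = (x \<noteq> y)"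

fun lit_true :: "('p, 'c::linorder) atom set \<Rightarrow> ('p, 'c) lit \<Rightarrow> bool" where
  "lit_true M (Pos A) = (A \<in> M)"
| "lit_true M (Neg A) = (A \<notin> M)"
| "lit_true M (Cmp t x y) = cmp_eval t x y"

definition body_true :: "('p, 'c::linorder) atom set \<Rightarrow> ('p, 'c) lit list \<Rightarrow> bool" where
  "body_true M B \<longleftrightarrow> (\<forall>l\<in>set B. lit_true M l)"

fun satisfies :: "('p, 'c::linorder) atom set \<Rightarrow> ('p, 'c) rule \<Rightarrow> bool" where
  "satisfies M (Std H B) = (body_true M B \<longrightarrow> H \<in> M)"
| "satisfies M (Constr B) = (\<not> body_true M B)"
| "satisfies M (Mapr k H B) = (body_true M B \<longrightarrow> H \<in> M)"

definition is_model :: "('p, 'c::linorder) rule set \<Rightarrow> ('p, 'c) atom set \<Rightarrow> bool" where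
  "is_model \<Pi> M \<longleftrightarrow> (\<forall>r\<in>\<Pi>. satisfies M r)"

definition MM :: "('p, 'c::linorder) rule set \<Rightarrow> ('p, 'c) atom set set" where
  "MM \<Pi> = {M. is_model \<Pi> M \<and> (\<forall>N. N \<subset> M \<longrightarrow> \<not> is_model \<Pi> N)}"

fun St :: "('p, 'a) rule \<Rightarrow> ('p, 'a) rule" where
  "St (Mapr k H B) = Std H B"
| "St r = r"

fun strip_neg :: "('p, 'a) rule \<Rightarrow> ('p, 'a) rule" where
  "strip_neg (Std H B) = Std H (filter (\<lambda>l. \<not> is_neg l) B)"
| "strip_neg (Constr B) = Constr (filter (\<lambda>l. \<not> is_neg l) B)"
| "strip_neg (Mapr k H B) = Mapr k H (filter (\<lambda>l. \<not> is_neg l) B)"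

definition reduct :: "('p, 'v, 'c) peer list \<Rightarrow> ('p, 'c) atom set \<Rightarrow> ('p, 'c) rule set" where
  "reduct PS M = strip_neg `
     {r \<in> ground PS. (\<forall>A. Neg A \<in> set (body r) \<longrightarrow> A \<notin> M) \<and>
                     (\<forall>k H B. r = Mapr k H B \<longrightarrow> H \<in> M)}"

definition weak_model :: "('p, 'v, 'c::linorder) peer list \<Rightarrow> ('p, 'c) atom set \<Rightarrow> bool" where
  "weak_model PS M \<longleftrightarrow> MM (St ` reduct PS M) = {M}"

definition max_preds :: "('p, 'v, 'c) peer list \<Rightarrow> (nat \<times> 'p) set" where
  "max_preds PS = {(peer_of H, pred_of H) | H B. Mapr MaxM H B \<in> allMP PS}"
definition min_preds :: "('p, 'v, 'c) peer list \<Rightarrow> (nat \<times> 'p) set" where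
  "min_preds PS = {(peer_of H, pred_of H) | H B. Mapr MinM H B \<in> allMP PS}"

definition restr :: "('p, 'c) atom set \<Rightarrow> (nat \<times> 'p) set \<Rightarrow> ('p, 'c) atom set" where
  "restr M Q = {A \<in> M. (peer_of A, pred_of A) \<in> Q}"

definition preferable :: "('p, 'v, 'c) peer list \<Rightarrow> ('p, 'c) atom set \<Rightarrow> ('p, 'c) atom set \<Rightarrow> bool" where
  "preferable PS M N \<longleftrightarrow>
     restr M (max_preds PS) \<supset> restr N (max_preds PS) \<or>
     (restr M (max_preds PS) = restr N (max_preds PS) \<and>
      restr M (min_preds PS) \<subseteq> restr N (min_preds PS))"

definition pref_rel :: "('p, 'v, 'c::linorder) peer list \<Rightarrow> (('p, 'c) atom set \<times> ('p, 'c) atom set) set" where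
  "pref_rel PS = {(M, N). weak_model PS M \<and> weak_model PS N \<and> preferable PS M N}"

end

theory Submission
  imports Defs
begin

lemma lit_true_mono:
  assumes "\<not> is_neg l" "lit_true M l" "M \<subseteq> N"
  shows "lit_true N l"
  using assms by (cases l) auto

lemma body_true_mono:
  assumes "\<forall>l\<in>set B. \<not> is_neg l" "body_true M B" "M \<subseteq> N"
  shows "body_true N B"
  using assms lit_true_mono unfolding body_true_def by blast

lemma St_strip_noneg:
  "r' \<in> St ` strip_neg ` X \<Longrightarrow> \<forall>l\<in>set (body r'). \<not> is_neg l"
proof -
  assume "r' \<in> St ` strip_neg ` X"
  then obtain r where "r' = St (strip_neg r)" by blast
  then show ?thesis by (cases r) auto
qed

lemma St_strip_noMapr:
  "r' \<in> St ` strip_neg ` X \<Longrightarrow> r' \<noteq> Mapr k H B"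
proof -
  assume "r' \<in> St ` strip_neg ` X"
  then obtain r where "r' = St (strip_neg r)" by blast
  then show ?thesis by (cases r) auto
qed

lemma pos_cmp_not_neg: "is_pos l \<or> is_cmp l \<Longrightarrow> \<not> is_neg l"
  by (cases l) auto

lemma ground_cases:
  assumes ps: "p2p_system PS"
    and nn: "\<forall>r\<in>allLP PS. \<forall>l\<in>set (body r). \<not> is_neg l"
    and r: "r \<in> ground PS"
  shows "(\<exists>B. r = Constr B) \<or>
         ((\<forall>l\<in>set (body r). \<not> is_neg l) \<and>
          (\<forall>k H B. r = Mapr k H B \<longrightarrow> (peer_of H, pred_of H) \<in> max_preds PS \<union> min_preds PS))"
proof -
  have pok: "\<And>P. P \<in> set PS \<Longrightarrow> peer_ok (length PS) (Suc (SOME k. k < length PS \<and> PS ! k = P)) P"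
  proof -
    fix P assume "P \<in> set PS"
    then obtain k where k: "k < length PS" "PS ! k = P" by (auto simp: in_set_conv_nth)
    let ?k = "SOME k. k < length PS \<and> PS ! k = P"
    have "?k < length PS \<and> PS ! ?k = P" using someI[of "\<lambda>k. k < length PS \<and> PS ! k = P" k] k by simp
    then show "peer_ok (length PS) (Suc ?k) P" using ps unfolding p2p_system_def by auto
  qed
  show ?thesis
  proof (cases "r \<in> (\<lambda>A. Std A []) ` allD PS")
    case True then show ?thesis by auto
  next
    case False
    then obtain \<sigma> r0 where r0: "r = grule \<sigma> r0" "r0 \<in> allLP PS \<union> allMP PS \<union> allIC PS"
      using r unfolding ground_def by blast
    have negb: "\<forall>l\<in>set (body r0). \<not> is_neg l \<Longrightarrow> \<forall>l\<in>set (body r). \<not> is_neg l"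
    proof -
      assume h: "\<forall>l\<in>set (body r0). \<not> is_neg l"
      have "\<forall>l\<in>set (body r0). \<not> is_neg (glit \<sigma> l)"
        using h by (metis glit.elims is_neg.simps)
      then show ?thesis using r0(1) by (cases r0) auto
    qed
    consider "r0 \<in> allLP PS" | "r0 \<in> allMP PS" | "r0 \<in> allIC PS" using r0 by blast
    then show ?thesis
    proof cases
      case 1
      then obtain P where P: "P \<in> set PS" "r0 \<in> LP P" unfolding allLP_def by blast
      then obtain H B where "r0 = Std H B" using pok[OF P(1)] unfolding peer_ok_def by blast
      then show ?thesis using negb nn 1 r0(1) by auto
    next
      case 2
      then obtain P where P: "P \<in> set PS" "r0 \<in> MP P" unfolding allMP_def by blast
      then have "mapping_rule_ok (length PS) (Suc (SOME k. k < length PS \<and> PS ! k = P)) r0"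
        using pok[OF P(1)] unfolding peer_ok_def by blast
      then obtain k H B where kHB: "r0 = Mapr k H B" "\<forall>l\<in>set B. is_pos l \<or> is_cmp l"
        unfolding mapping_rule_ok_def by blast
      have "\<forall>l\<in>set (body r0). \<not> is_neg l" using kHB pos_cmp_not_neg by auto
      then have a: "\<forall>l\<in>set (body r). \<not> is_neg l" by (rule negb)
      have hd: "(peer_of (gatom \<sigma> H), pred_of (gatom \<sigma> H)) = (peer_of H, pred_of H)"
        by (cases H) auto
      have "(peer_of H, pred_of H) \<in> max_preds PS \<union> min_preds PS"
        using 2 kHB(1) unfolding max_preds_def min_preds_def by (cases k) auto
      then show ?thesis using a r0(1) kHB(1) hd by auto
    next
      case 3
      then obtain P where P: "P \<in> set PS" "r0 \<in> IC P" unfolding allIC_def by blast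
      then obtain B where "r0 = Constr B" using pok[OF P(1)] unfolding peer_ok_def by blast
      then show ?thesis using r0(1) by auto
    qed
  qed
qed

lemma restr_mem:
  assumes "restr M Q = restr N Q" "(peer_of H, pred_of H) \<in> Q" "H \<in> M"
  shows "H \<in> N"
  using assms unfolding restr_def by blast

lemma std_transfer:
  assumes ps: "p2p_system PS"
    and nn: "\<forall>r\<in>allLP PS. \<forall>l\<in>set (body r). \<not> is_neg l"
    and mx: "restr M (max_preds PS) = restr N (max_preds PS)"
    and mn: "restr M (min_preds PS) = restr N (min_preds PS)"
    and s: "Std H B \<in> St ` reduct PS M"
  shows "Std H B \<in> St ` reduct PS N"
proof -
  obtain r where r: "r \<in> ground PS" "\<forall>A. Neg A \<in> set (body r) \<longrightarrow> A \<notin> M"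
    "\<forall>k H B. r = Mapr k H B \<longrightarrow> H \<in> M" "Std H B = St (strip_neg r)"
    using s unfolding reduct_def by blast
  have nc: "\<not> (\<exists>B. r = Constr B)" using r(4) by auto
  then have c: "(\<forall>l\<in>set (body r). \<not> is_neg l) \<and>
          (\<forall>k H B. r = Mapr k H B \<longrightarrow> (peer_of H, pred_of H) \<in> max_preds PS \<union> min_preds PS)"
    using ground_cases[OF ps nn r(1)] by blast
  have "\<forall>A. Neg A \<in> set (body r) \<longrightarrow> A \<notin> N" using c by force
  moreover have "\<forall>k H B. r = Mapr k H B \<longrightarrow> H \<in> N"
    using c r(3) restr_mem[OF mx] restr_mem[OF mn] by blast
  ultimately have "r \<in> {r \<in> ground PS. (\<forall>A. Neg A \<in> set (body r) \<longrightarrow> A \<notin> N) \<and>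
                     (\<forall>k H B. r = Mapr k H B \<longrightarrow> H \<in> N)}" using r(1) by blast
  then show ?thesis using r(4) unfolding reduct_def by blast
qed

lemma inter_model:
  assumes ps: "p2p_system PS"
    and nn: "\<forall>r\<in>allLP PS. \<forall>l\<in>set (body r). \<not> is_neg l"
    and mx: "restr M (max_preds PS) = restr N (max_preds PS)"
    and mn: "restr M (min_preds PS) = restr N (min_preds PS)"
    and wM: "weak_model PS M" and wN: "weak_model PS N"
  shows "M \<subseteq> N"
proof -
  have MM: "M \<in> MM (St ` reduct PS M)" using wM unfolding weak_model_def by auto
  have NM: "N \<in> MM (St ` reduct PS N)" using wN unfolding weak_model_def by auto
  have modM: "is_model (St ` reduct PS M) M" using MM unfolding MM_def by auto
  have modN: "is_model (St ` reduct PS N) N" using NM unfolding MM_def by auto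
  have "is_model (St ` reduct PS M) (M \<inter> N)"
    unfolding is_model_def
  proof
    fix r' assume r': "r' \<in> St ` reduct PS M"
    have r'': "r' \<in> St ` strip_neg ` {r \<in> ground PS. (\<forall>A. Neg A \<in> set (body r) \<longrightarrow> A \<notin> M) \<and>
                     (\<forall>k H B. r = Mapr k H B \<longrightarrow> H \<in> M)}" using r' unfolding reduct_def .
    note noneg = St_strip_noneg[OF r'']
    show "satisfies (M \<inter> N) r'"
    proof (cases r')
      case (Std H B)
      have sN: "Std H B \<in> St ` reduct PS N" using r' unfolding Std by (rule std_transfer[OF ps nn mx mn])
      show ?thesis
      proof (simp add: Std, rule impI)
        assume b: "body_true (M \<inter> N) B"
        have bM: "body_true M B" using body_true_mono[OF _ b] noneg Std by auto
        have bN: "body_true N B" using body_true_mono[OF _ b] noneg Std by auto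
        have "satisfies M (Std H B)" using modM r' Std unfolding is_model_def by (metis (no_types, lifting))
        then have "H \<in> M" using bM by simp
        have "satisfies N (Std H B)" using modN sN unfolding is_model_def by (metis (no_types, lifting))
        then have "H \<in> N" using bN by simp
        note \<open>H \<in> M\<close>
        show "H \<in> M \<and> H \<in> N" using \<open>H \<in> M\<close> \<open>H \<in> N\<close> by blast
      qed
    next
      case (Constr B)
      show ?thesis
      proof (simp add: Constr, rule notI)
        assume b: "body_true (M \<inter> N) B"
        have bM: "body_true M B" using body_true_mono[OF _ b] noneg Constr by auto
        have "satisfies M (Constr B)" using modM r' Constr unfolding is_model_def by (metis (no_types, lifting))
        then show False using bM by simp
      qed
    next
      case (Mapr k H B)
      then show ?thesis using St_strip_noMapr[OF r''] by blast
    qed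
  qed
  then have "\<not> (M \<inter> N \<subset> M)" using MM unfolding MM_def by blast
  then show ?thesis by blast
qed

theorem proposition4:
  fixes PS :: "('p, 'v, 'c::linorder) peer list"
  assumes "p2p_system PS"
    and "\<forall>r\<in>allLP PS. \<forall>l\<in>set (body r). \<not> is_neg l"
  shows "partial_order_on {M. weak_model PS M} (pref_rel PS)"
  unfolding partial_order_on_def preorder_on_def
proof (intro conjI)
  show "refl_on {M. weak_model PS M} (pref_rel PS)"
  proof (rule refl_onI)
    fix M assume "M \<in> {M. weak_model PS M}"
    then show "(M, M) \<in> pref_rel PS" unfolding pref_rel_def preferable_def by auto
  qed
  show "pref_rel PS \<subseteq> {M. weak_model PS M} \<times> {M. weak_model PS M}"
    unfolding pref_rel_def by auto
  show "trans (pref_rel PS)"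
    unfolding trans_def pref_rel_def preferable_def by blast
  show "antisym (pref_rel PS)"
  proof (rule antisymI)
    fix M N assume a: "(M, N) \<in> pref_rel PS" "(N, M) \<in> pref_rel PS"
    then have w: "weak_model PS M" "weak_model PS N" unfolding pref_rel_def by auto
    have mx: "restr M (max_preds PS) = restr N (max_preds PS)"
     and mn: "restr M (min_preds PS) = restr N (min_preds PS)"
      using a unfolding pref_rel_def preferable_def by auto
    show "M = N"
      using inter_model[OF assms mx mn w] inter_model[OF assms mx[symmetric] mn[symmetric] w(2) w(1)]
      by blast
  qed
qed

end
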